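(* Let $n\ge2$, let $A\in\mathbb{Z}^{m\times n}$ have full column rank, and let $b\in\mathbb{Z}^m$ be such that $P=\{x\in\mathbb{R}^n:Ax\le b\}$ is full-dimensional, $P\cap\mathbb{Z}^n=\emptyset$, and each row of $A$ defines a facet of $P$. Then there exists a row $a^\top$ of $A$ such that $w^{a}(P)\le\pi(A)-1$.
   Context: $w^{a}(P)=\max_{x\in P}a^\top x-\min_{y\in P}a^\top y$. The parameter $\pi(A)$ is defined as \[ \pi(A)=\max_{\substack{b'\in\mathbb{Z}^m:\\ P(A,b')\cap\mathbb{Z}^n\neq\emptyset}}\ \max_{x^*\text{ vertex of }P(A,b')}\ \min_{z^*\in P(A,b')\cap\mathbb{Z}^n}\|A(x^*-z^* )\|_\infty, \] where $P(A,b')=\{x\in\mathbb{R}^n:Ax\le b'\}$. *)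

theory Defs
  imports "HOL-Analysis.Analysis"
begin

definition real_mat :: "int^'n^'m \<Rightarrow> real^'n^'m" where
  "real_mat A = (\<chi> i j. real_of_int (A $ i $ j))"

definition polyh :: "int^'n^'m \<Rightarrow> int^'m \<Rightarrow> (real^'n) set" where
  "polyh A b = {x. \<forall>i. (real_mat A *v x) $ i \<le> real_of_int (b $ i)}"

definition int_points :: "(real^'n) set" where
  "int_points = {z. \<forall>j. z $ j \<in> \<int>}"

text \<open>Width w^a(P) = max_{x in P} a x - min_{y in P} a y, taken in the extended reals
  (equal to the max/min when attained; infinite when P is unbounded in direction a).\<close>
definition width_dir :: "real^'n \<Rightarrow> (real^'n) set \<Rightarrow> ereal" where
  "width_dir a P = (SUP x\<in>P. ereal (a \<bullet> x)) - (INF y\<in>P. ereal (a \<bullet> y))"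

definition pi_param :: "int^'n^'m \<Rightarrow> ereal" where
  "pi_param A =
     (SUP b' \<in> {b'. polyh A b' \<inter> int_points \<noteq> {}}.
        SUP xs \<in> {x. x extreme_point_of polyh A b'}.
          INF zs \<in> polyh A b' \<inter> int_points.
            ereal (infnorm (real_mat A *v (xs - zs))))"

end

theory Submission
  imports Defs "HOL-Analysis.Kronecker_Approximation_Theorem"
begin


definition Qr :: "real^'n^'m \<Rightarrow> real^'m \<Rightarrow> (real^'n) set" where
  "Qr R \<beta> = {x. \<forall>j. R$j \<bullet> x \<le> \<beta>$j}"

definition isv :: "real^'n^'m \<Rightarrow> real^'m \<Rightarrow> real^'n \<Rightarrow> bool" where
  "isv R \<beta> x \<longleftrightarrow> x \<in> Qr R \<beta> \<and> (\<forall>d. (\<forall>j. R$j \<bullet> x = \<beta>$j \<longrightarrow> R$j \<bullet> d = 0) \<longrightarrow> d = 0)"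

lemma isv_extreme:
  assumes "isv R \<beta> x" shows "x extreme_point_of Qr R \<beta>"
proof -
  have xQ: "x \<in> Qr R \<beta>" using assms by (simp add: isv_def)
  { fix y z assume yQ: "y \<in> Qr R \<beta>" and zQ: "z \<in> Qr R \<beta>" and xs: "x \<in> open_segment y z"
    then obtain u where u: "0 < u" "u < 1" and xe: "x = (1 - u) *\<^sub>R y + u *\<^sub>R z" and "y \<noteq> z"
      by (auto simp: in_segment)
    have "y - x = 0"
    proof (rule assms[unfolded isv_def, THEN conjunct2, rule_format])
      fix j assume t: "R$j \<bullet> x = \<beta>$j"
      have ry: "R$j \<bullet> y \<le> \<beta>$j" and rz: "R$j \<bullet> z \<le> \<beta>$j" using yQ zQ by (auto simp: Qr_def)
      have xc: "R$j \<bullet> x = (1-u) * (R$j \<bullet> y) + u * (R$j \<bullet> z)" using xe by (simp add: inner_add_right)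
      have uz: "u * (R$j \<bullet> z) \<le> u * \<beta>$j" using rz u by (intro mult_left_mono) auto
      have sp: "(1-u) * \<beta>$j + u * \<beta>$j = \<beta>$j" by (simp add: algebra_simps)
      have "\<not> R$j \<bullet> y < \<beta>$j"
      proof
        assume lt: "R$j \<bullet> y < \<beta>$j"
        have "(1-u) * (R$j \<bullet> y) < (1-u) * \<beta>$j" using lt u by (intro mult_strict_left_mono) auto
        then show False using uz sp xc t by linarith
      qed
      then have "R$j \<bullet> y = \<beta>$j" using ry by linarith
      then show "R$j \<bullet> (y - x) = 0" using t by (simp add: inner_diff_right)
    qed
    then have "x = y" by simp
    with xs have False by (simp add: open_segment_def)
  }
  then show ?thesis using xQ by (auto simp: extreme_point_of_def)
qed

lemma isv_finite: "finite {x. isv R \<beta> x}"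
proof -
  let ?T = "\<lambda>x. {j. R$j \<bullet> x = \<beta>$j}"
  have "inj_on ?T {x. isv R \<beta> x}"
  proof (rule inj_onI)
    fix x y assume x: "x \<in> {x. isv R \<beta> x}" and y: "y \<in> {x. isv R \<beta> x}" and e: "?T x = ?T y"
    have "x - y = 0"
    proof (rule x[simplified, unfolded isv_def, THEN conjunct2, rule_format])
      fix j assume "R$j \<bullet> x = \<beta>$j"
      moreover then have "R$j \<bullet> y = \<beta>$j" using e by blast
      ultimately show "R$j \<bullet> (x - y) = 0" by (simp add: inner_diff_right)
    qed
    then show "x = y" by simp
  qed
  moreover have "?T ` {x. isv R \<beta> x} \<subseteq> Pow UNIV" by auto
  moreover have "finite (?T ` {x. isv R \<beta> x})" by (rule finite_subset[OF calculation(2)]) simp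
  ultimately show ?thesis using finite_imageD by blast
qed


lemma walk_step:
  fixes R :: "real^'n^'m"
  assumes inj: "\<forall>d. R *v d = 0 \<longrightarrow> d = 0"
    and bnd: "\<forall>d. (\<forall>j. R$j \<bullet> d \<le> 0) \<longrightarrow> R$k \<bullet> d \<ge> 0"
    and xQ: "x \<in> Qr R \<beta>" and nv: "\<not> isv R \<beta> x"
  shows "\<exists>x'. x' \<in> Qr R \<beta> \<and> R$k \<bullet> x' \<le> R$k \<bullet> x \<and>
     {j. R$j \<bullet> x' < \<beta>$j} \<subset> {j. R$j \<bullet> x < \<beta>$j}"
proof -
  obtain d0 where d0: "d0 \<noteq> 0" "\<forall>j. R$j \<bullet> x = \<beta>$j \<longrightarrow> R$j \<bullet> d0 = 0"
    using nv xQ by (auto simp: isv_def)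
  have ex: "\<exists>d. d \<noteq> 0 \<and> (\<forall>j. R$j \<bullet> x = \<beta>$j \<longrightarrow> R$j \<bullet> d = 0) \<and> R$k \<bullet> d \<le> 0 \<and> (\<exists>j. R$j \<bullet> d > 0)"
  proof -
    obtain d1 where d1: "d1 \<noteq> 0" "\<forall>j. R$j \<bullet> x = \<beta>$j \<longrightarrow> R$j \<bullet> d1 = 0" "R$k \<bullet> d1 \<le> 0"
    proof (cases "R$k \<bullet> d0 \<le> 0")
      case True then show ?thesis using that d0 by blast
    next
      case False then show ?thesis using that[of "-d0"] d0 by auto
    qed
    show ?thesis
    proof (cases "R$k \<bullet> d1 < 0")
      case True
      have "\<exists>j. R$j \<bullet> d1 > 0"
      proof (rule ccontr)
        assume "\<not> (\<exists>j. R$j \<bullet> d1 > 0)"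
        then have "\<forall>j. R$j \<bullet> d1 \<le> 0" by (simp add: not_less)
        then have "R$k \<bullet> d1 \<ge> 0" using bnd by blast
        then show False using True by simp
      qed
      then show ?thesis using d1 by blast
    next
      case False
      then have k0: "R$k \<bullet> d1 = 0" using d1 by auto
      have "R *v d1 \<noteq> 0" using inj d1 by blast
      then obtain j where j: "R$j \<bullet> d1 \<noteq> 0" by (auto simp: vec_eq_iff matrix_vector_mul_component)
      show ?thesis
      proof (cases "R$j \<bullet> d1 > 0")
        case True then show ?thesis using d1 by blast
      next
        case False
        then have "R$j \<bullet> (-d1) > 0" using j by auto
        then show ?thesis using d1 k0 by (intro exI[of _ "-d1"]) auto
      qed
    qed
  qed
  then obtain d where d: "d \<noteq> 0" "\<forall>j. R$j \<bullet> x = \<beta>$j \<longrightarrow> R$j \<bullet> d = 0" "R$k \<bullet> d \<le> 0"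
    and jex: "\<exists>j. R$j \<bullet> d > 0" by blast
  define J where "J = {j. R$j \<bullet> d > 0}"
  define g where "g = (\<lambda>j. (\<beta>$j - R$j \<bullet> x) / (R$j \<bullet> d))"
  have Jne: "J \<noteq> {}" and Jf: "finite J" using jex by (auto simp: J_def)
  define t where "t = Min (g ` J)"
  have "t \<in> g ` J" unfolding t_def using Jne Jf by (intro Min_in) auto
  then obtain j0 where j0: "j0 \<in> J" "t = g j0" by auto
  have tle: "t \<le> g j" if "j \<in> J" for j using that Jf by (auto simp: t_def)
  have slackJ: "R$j \<bullet> x < \<beta>$j" if "j \<in> J" for j
  proof -
    have "R$j \<bullet> x \<le> \<beta>$j" using xQ by (auto simp: Qr_def)
    moreover have "R$j \<bullet> x \<noteq> \<beta>$j" using d(2) that by (auto simp: J_def)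
    ultimately show ?thesis by simp
  qed
  have tpos: "t > 0" using j0 slackJ[OF j0(1)] by (auto simp: g_def J_def)
  define x' where "x' = x + t *\<^sub>R d"
  have inn: "R$j \<bullet> x' = R$j \<bullet> x + t * (R$j \<bullet> d)" for j by (simp add: x'_def inner_add_right)
  have x'Q: "x' \<in> Qr R \<beta>"
  proof -
    { fix j
      have "R$j \<bullet> x' \<le> \<beta>$j"
      proof (cases "j \<in> J")
        case True
        then have pos: "R$j \<bullet> d > 0" by (simp add: J_def)
        have "t * (R$j \<bullet> d) \<le> g j * (R$j \<bullet> d)" using tle[OF True] pos by (simp add: mult_right_mono)
        also have "\<dots> = \<beta>$j - R$j \<bullet> x" using pos by (simp add: g_def)
        finally show ?thesis using inn[of j] by simp
      next
        case False
        then have "R$j \<bullet> d \<le> 0" by (simp add: J_def)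
        then have "t * (R$j \<bullet> d) \<le> 0" using tpos by (simp add: mult_nonneg_nonpos)
        moreover have "R$j \<bullet> x \<le> \<beta>$j" using xQ by (auto simp: Qr_def)
        ultimately show ?thesis using inn[of j] by simp
      qed }
    then show ?thesis by (simp add: Qr_def)
  qed
  have kle: "R$k \<bullet> x' \<le> R$k \<bullet> x" using inn[of k] d(3) tpos by (simp add: mult_nonneg_nonpos)
  have sub: "{j. R$j \<bullet> x' < \<beta>$j} \<subseteq> {j. R$j \<bullet> x < \<beta>$j}"
  proof
    fix j assume "j \<in> {j. R$j \<bullet> x' < \<beta>$j}"
    then have a: "R$j \<bullet> x' < \<beta>$j" by simp
    have "R$j \<bullet> x \<le> \<beta>$j" using xQ by (auto simp: Qr_def)
    moreover have "R$j \<bullet> x \<noteq> \<beta>$j" using a d(2) inn[of j] by auto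
    ultimately show "j \<in> {j. R$j \<bullet> x < \<beta>$j}" by simp
  qed
  have "R$j0 \<bullet> x' = \<beta>$j0"
  proof -
    have pos: "R$j0 \<bullet> d > 0" using j0 by (simp add: J_def)
    have "t * (R$j0 \<bullet> d) = \<beta>$j0 - R$j0 \<bullet> x" using pos j0(2) by (simp add: g_def)
    then show ?thesis using inn[of j0] by simp
  qed
  moreover have "j0 \<in> {j. R$j \<bullet> x < \<beta>$j}" using slackJ[OF j0(1)] by simp
  moreover have "j0 \<notin> {j. R$j \<bullet> x' < \<beta>$j}" using calculation(1) by simp
  ultimately have ne: "{j. R$j \<bullet> x' < \<beta>$j} \<noteq> {j. R$j \<bullet> x < \<beta>$j}" by blast
  have "{j. R$j \<bullet> x' < \<beta>$j} \<subset> {j. R$j \<bullet> x < \<beta>$j}" using sub ne by (rule psubsetI)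
  then show ?thesis using x'Q kle by blast
qed

lemma walk:
  fixes R :: "real^'n^'m"
  assumes inj: "\<forall>d. R *v d = 0 \<longrightarrow> d = 0"
    and bnd: "\<forall>d. (\<forall>j. R$j \<bullet> d \<le> 0) \<longrightarrow> R$k \<bullet> d \<ge> 0"
  shows "x \<in> Qr R \<beta> \<Longrightarrow> \<exists>v. isv R \<beta> v \<and> R$k \<bullet> v \<le> R$k \<bullet> x"
proof (induction "card {j. R$j \<bullet> x < \<beta>$j}" arbitrary: x rule: less_induct)
  case less
  show ?case
  proof (cases "isv R \<beta> x")
    case True then show ?thesis by auto
  next
    case False
    obtain x' where x': "x' \<in> Qr R \<beta>" "R$k \<bullet> x' \<le> R$k \<bullet> x"
      "{j. R$j \<bullet> x' < \<beta>$j} \<subset> {j. R$j \<bullet> x < \<beta>$j}"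
      using walk_step[OF inj bnd less.prems False] by blast
    have "card {j. R$j \<bullet> x' < \<beta>$j} < card {j. R$j \<bullet> x < \<beta>$j}"
      using x'(3) by (intro psubset_card_mono) auto
    then obtain v where v1: "isv R \<beta> v" and v2: "R$k \<bullet> v \<le> R$k \<bullet> x'" using less.hyps x'(1) by blast
    have "R$k \<bullet> v \<le> R$k \<bullet> x" using v2 x'(2) by linarith
    then show ?thesis using v1 by blast
  qed
qed

lemma lp_min:
  fixes R :: "real^'n^'m"
  assumes inj: "\<forall>d. R *v d = 0 \<longrightarrow> d = 0"
    and bnd: "\<forall>d. (\<forall>j. R$j \<bullet> d \<le> 0) \<longrightarrow> R$k \<bullet> d \<ge> 0"
    and ne: "y0 \<in> Qr R \<beta>"
  shows "\<exists>v. v extreme_point_of Qr R \<beta> \<and> (\<forall>y\<in>Qr R \<beta>. R$k \<bullet> v \<le> R$k \<bullet> y)"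
proof -
  let ?V = "{x. isv R \<beta> x}"
  let ?f = "\<lambda>x. R$k \<bullet> x"
  have Vne: "?V \<noteq> {}" using walk[OF inj bnd ne] by auto
  have "Min (?f ` ?V) \<in> ?f ` ?V" using isv_finite[of R \<beta>] Vne by (intro Min_in) auto
  then obtain v where v0: "Min (?f ` ?V) = ?f v" "v \<in> ?V" by (rule imageE)
  note v = v0(2) v0(1)[symmetric]
  have "\<forall>y\<in>Qr R \<beta>. ?f v \<le> ?f y"
  proof
    fix y assume "y \<in> Qr R \<beta>"
    then obtain w where w: "isv R \<beta> w" "?f w \<le> ?f y" using walk[OF inj bnd] by blast
    have "?f v \<le> ?f w" using v(2) w(1) isv_finite[of R \<beta>] by (simp add: Min_le)
    then show "?f v \<le> ?f y" using w(2) by simp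
  qed
  then show ?thesis using v(1) isv_extreme by blast
qed



definition zr :: "int^'n \<Rightarrow> real^'n" where "zr p = (\<chi> j. real_of_int (p$j))"

lemma zr_inner: "real_mat A $ j \<bullet> zr p = real_of_int ((A *v p)$j)"
  by (simp add: matrix_vector_mult_def real_mat_def inner_vec_def zr_def)

lemma int_dir:
  fixes A :: "int^'n^'m" and d :: "real^'n"
  assumes d1: "\<forall>j. real_mat A $ j \<bullet> d \<le> 0" and d2: "\<forall>k\<in>S. real_mat A $ k \<bullet> d < 0"
  shows "\<exists>p::int^'n. (\<forall>j. (A *v p)$j \<le> 0) \<and> (\<forall>k\<in>S. (A *v p)$k < 0)"
proof -
  define R where "R = real_mat A"
  define \<delta> where "\<delta> = Min (insert 1 ((\<lambda>k. -(R$k \<bullet> d)) ` S))"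
  have fin: "finite (insert 1 ((\<lambda>k. -(R$k \<bullet> d)) ` S))" by simp
  have dpos: "\<delta> > 0" unfolding \<delta>_def using fin d2 by (auto simp: Min_gr_iff R_def)
  have dle1: "\<delta> \<le> 1" unfolding \<delta>_def using fin by (auto intro: Min_le)
  have dS: "R$k \<bullet> d \<le> -\<delta>" if "k \<in> S" for k
  proof -
    have "\<delta> \<le> -(R$k \<bullet> d)" unfolding \<delta>_def using fin that by (auto intro: Min_le)
    then show ?thesis by simp
  qed
  define M where "M = (\<Sum>j\<in>UNIV. \<Sum>i\<in>UNIV. \<bar>R$j$i\<bar>)"
  have M0: "M \<ge> 0" unfolding M_def by (intro sum_nonneg) auto
  define N :: nat where "N = nat \<lceil>M / \<delta>\<rceil> + 1"
  have Npos: "N > 0" by (simp add: N_def)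
  have "M / \<delta> < real N" unfolding N_def by linarith
  then have MN: "M / real N < \<delta>" using dpos Npos by (simp add: field_simps)
  obtain h where h: "bij_betw h {0..<CARD('n)} (UNIV::'n set)"
    using ex_bij_betw_nat_finite[of "UNIV::'n set"] by auto
  obtain q p' where q: "0 < q" and p': "\<And>i. i < CARD('n) \<Longrightarrow> \<bar>of_int q * d $ h i - of_int (p' i)\<bar> < 1 / N"
    using Dirichlet_approx_simult[OF Npos, where \<theta>="\<lambda>i. d $ h i" and n="CARD('n)"] by blast
  define p :: "int^'n" where "p = (\<chi> j. p' (inv_into {0..<CARD('n)} h j))"
  have e: "\<bar>of_int q * d $ j - of_int (p $ j)\<bar> < 1 / N" for j
  proof -
    let ?i = "inv_into {0..<CARD('n)} h j"
    have jim: "j \<in> h ` {0..<CARD('n)}" using h by (simp add: bij_betw_def)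
    have "?i \<in> {0..<CARD('n)}" by (rule inv_into_into[OF jim])
    moreover have "h ?i = j" by (rule f_inv_into_f[OF jim])
    ultimately show ?thesis using p'[of ?i] by (simp add: p_def)
  qed
  have key: "real_of_int ((A *v p)$j) < of_int q * (R$j \<bullet> d) + \<delta>" for j
  proof -
    have eq: "real_of_int ((A *v p)$j) = of_int q * (R$j \<bullet> d) - (\<Sum>i\<in>UNIV. R$j$i * (of_int q * d$i - of_int (p$i)))"
      by (simp add: zr_inner[symmetric] R_def[symmetric] inner_vec_def zr_def sum_subtractf
            right_diff_distrib sum_distrib_left algebra_simps)
    have "\<bar>\<Sum>i\<in>UNIV. R$j$i * (of_int q * d$i - of_int (p$i))\<bar> \<le> (\<Sum>i\<in>UNIV. \<bar>R$j$i\<bar> * (1 / N))"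
    proof -
      have "\<bar>\<Sum>i\<in>UNIV. R$j$i * (of_int q * d$i - of_int (p$i))\<bar> \<le> (\<Sum>i\<in>UNIV. \<bar>R$j$i * (of_int q * d$i - of_int (p$i))\<bar>)"
        by (rule sum_abs)
      also have "\<dots> \<le> (\<Sum>i\<in>UNIV. \<bar>R$j$i\<bar> * (1 / N))"
      proof (intro sum_mono)
        fix i
        have "\<bar>R$j$i\<bar> * \<bar>of_int q * d$i - of_int (p$i)\<bar> \<le> \<bar>R$j$i\<bar> * (1 / N)"
          using e[of i] by (intro mult_left_mono) auto
        then show "\<bar>R$j$i * (of_int q * d$i - of_int (p$i))\<bar> \<le> \<bar>R$j$i\<bar> * (1 / N)"
          by (simp add: abs_mult)
      qed
      finally show ?thesis .
    qed
    also have "\<dots> = (\<Sum>i\<in>UNIV. \<bar>R$j$i\<bar>) / N" by (simp add: sum_divide_distrib)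
    also have "\<dots> \<le> M / N"
    proof -
      have "(\<Sum>i\<in>UNIV. \<bar>R$j$i\<bar>) \<le> M" unfolding M_def
        by (rule member_le_sum[of j UNIV "\<lambda>j. \<Sum>i\<in>UNIV. \<bar>R$j$i\<bar>"]) (auto intro: sum_nonneg)
      then show ?thesis using Npos by (simp add: divide_right_mono)
    qed
    finally show ?thesis using eq MN by linarith
  qed
  have A1: "(A *v p)$j \<le> 0" for j
  proof -
    have "of_int q * (R$j \<bullet> d) \<le> 0" using d1 q by (simp add: R_def mult_nonneg_nonpos)
    then have "real_of_int ((A *v p)$j) < 1" using key[of j] dle1 by linarith
    then show ?thesis by linarith
  qed
  have A2: "(A *v p)$k < 0" if "k \<in> S" for k
  proof -
    have neg: "R$k \<bullet> d \<le> -\<delta>" using dS that .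
    have "of_int q * (R$k \<bullet> d) \<le> 1 * (R$k \<bullet> d)"
      using q neg dpos by (intro mult_right_mono_neg) auto
    then have "real_of_int ((A *v p)$k) < 0" using key[of k] neg by linarith
    then show ?thesis by linarith
  qed
  show ?thesis using A1 A2 by blast
qed



theorem lemma9:
  fixes A :: "int^'n^'m" and b :: "int^'m"
  assumes "CARD('n) \<ge> 2"
    and "rank (real_mat A) = CARD('n)"
    and "aff_dim (polyh A b) = int CARD('n)"
    and "polyh A b \<inter> int_points = {}"
    and "\<forall>i. {x \<in> polyh A b. real_mat A $ i \<bullet> x = real_of_int (b $ i)} facet_of polyh A b"
  shows "\<exists>i. width_dir (real_mat A $ i) (polyh A b) \<le> pi_param A - 1"
proof -
  define R where "R = real_mat A"
  have inj: "\<forall>d. R *v d = 0 \<longrightarrow> d = 0"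
  proof (intro allI impI)
    fix d :: "real^'n" assume "R *v d = 0"
    then have "R *v d = R *v 0" by simp
    moreover have "inj ((*v) R)" using assms(2) full_rank_injective[of R] by (simp add: R_def)
    ultimately show "d = 0" by (meson injD)
  qed
  define V :: "int^'n \<Rightarrow> nat" where "V zi = (\<Sum>j\<in>UNIV. nat ((A *v zi)$j - b$j))" for zi
  obtain zi0 where zmin: "\<And>zi. V zi0 \<le> V zi"
    using ex_has_least_nat[of "\<lambda>_. True" 0 V] by auto
  have polyh_iff: "zr zi \<in> polyh A \<beta> \<longleftrightarrow> (\<forall>j. (A *v zi)$j \<le> \<beta>$j)" for zi \<beta>
    by (simp add: polyh_def matrix_vector_mul_component zr_inner)
  have zint: "zr zi \<in> int_points" for zi by (simp add: int_points_def zr_def)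
  have int_zr: "\<exists>zi. zs = zr zi" if "zs \<in> int_points" for zs
  proof -
    have "zs = zr (\<chi> j. \<lfloor>zs$j\<rfloor>)" using that
      by (simp add: int_points_def zr_def vec_eq_iff)
    then show ?thesis by blast
  qed
  have "zr zi0 \<notin> polyh A b" using assms(4) zint by blast
  then obtain k0 where k0: "(A *v zi0)$k0 > b$k0" using polyh_iff by (auto simp: not_le)
  define b' where "b' = (\<chi> j. max (b$j) ((A *v zi0)$j))"
  define S where "S = {k. (A *v zi0)$k > b$k}"
  have k0S: "k0 \<in> S" using k0 by (simp add: S_def)
  have b'S: "b'$k = (A *v zi0)$k" if "k \<in> S" for k using that by (simp add: S_def b'_def)
  have C1: "(A *v zi)$k = b'$k" if zi: "\<forall>j. (A *v zi)$j \<le> b'$j" and kS: "k \<in> S" for zi k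
  proof (rule ccontr)
    assume ne: "(A *v zi)$k \<noteq> b'$k"
    have "V zi < V zi0" unfolding V_def
    proof (rule sum_strict_mono_ex1)
      show "\<forall>j\<in>UNIV. nat ((A *v zi)$j - b$j) \<le> nat ((A *v zi0)$j - b$j)"
      proof
        fix j
        have "(A *v zi)$j \<le> max (b$j) ((A *v zi0)$j)" using zi by (simp add: b'_def)
        then show "nat ((A *v zi)$j - b$j) \<le> nat ((A *v zi0)$j - b$j)" by linarith
      qed
      have "(A *v zi)$k < (A *v zi0)$k" using zi ne b'S[OF kS] by (metis order.not_eq_order_implies_strict)
      moreover have "(A *v zi0)$k > b$k" using kS by (simp add: S_def)
      ultimately have "nat ((A *v zi)$k - b$k) < nat ((A *v zi0)$k - b$k)" by linarith
      then show "\<exists>j\<in>UNIV. nat ((A *v zi)$j - b$j) < nat ((A *v zi0)$j - b$j)" by blast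
    qed simp
    then show False using zmin[of zi] by simp
  qed
  have bb': "b$j \<le> b'$j" for j by (simp add: b'_def)
  have z0b': "(A *v zi0)$j \<le> b'$j" for j by (simp add: b'_def)
  have Qeq: "polyh A \<beta> = Qr R (\<chi> j. real_of_int (\<beta>$j))" for \<beta>
    by (simp add: polyh_def Qr_def matrix_vector_mul_component R_def)
  have PQ: "polyh A b \<subseteq> polyh A b'"
  proof
    fix x assume "x \<in> polyh A b"
    then show "x \<in> polyh A b'" unfolding polyh_def using bb'
      by (auto intro: order_trans simp del: of_int_le_iff)
         (meson of_int_le_iff order_trans)
  qed
  have z0Q: "zr zi0 \<in> polyh A b'" using polyh_iff z0b' by blast
  show ?thesis
  proof (cases "\<exists>k\<in>S. \<forall>d. (\<forall>j. R$j \<bullet> d \<le> 0) \<longrightarrow> R$k \<bullet> d \<ge> 0")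
    case True
    then obtain k where kS: "k \<in> S" and bnd: "\<forall>d. (\<forall>j. R$j \<bullet> d \<le> 0) \<longrightarrow> R$k \<bullet> d \<ge> 0" by blast
    obtain v where v: "v extreme_point_of polyh A b'" and vmin: "\<forall>y\<in>polyh A b'. R$k \<bullet> v \<le> R$k \<bullet> y"
      using lp_min[OF inj bnd, of "zr zi0" "\<chi> j. real_of_int (b'$j)"] z0Q unfolding Qeq by blast
    have pi_ge: "ereal (real_of_int (b'$k) - R$k \<bullet> v) \<le> pi_param A"
      unfolding pi_param_def
    proof (rule SUP_upper2[where i=b'])
      show "b' \<in> {b'. polyh A b' \<inter> int_points \<noteq> {}}" using z0Q zint by blast
      show "ereal (real_of_int (b'$k) - R$k \<bullet> v) \<le> (SUP xs\<in>{x. x extreme_point_of polyh A b'}.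
          INF zs\<in>polyh A b' \<inter> int_points. ereal (infnorm (real_mat A *v (xs - zs))))"
      proof (rule SUP_upper2[where i=v])
        show "v \<in> {x. x extreme_point_of polyh A b'}" using v by simp
        show "ereal (real_of_int (b'$k) - R$k \<bullet> v) \<le> (INF zs\<in>polyh A b' \<inter> int_points. ereal (infnorm (real_mat A *v (v - zs))))"
        proof (rule INF_greatest)
          fix zs assume zs: "zs \<in> polyh A b' \<inter> int_points"
          then obtain zi where zi: "zs = zr zi" using int_zr by blast
          have "\<forall>j. (A *v zi)$j \<le> b'$j" using zs zi polyh_iff by blast
          then have eqk: "(A *v zi)$k = b'$k" using C1 kS by blast
          have "(R *v (v - zs))$k = R$k \<bullet> v - real_of_int (b'$k)"
            using eqk by (simp add: matrix_vector_mul_component inner_diff_right zi zr_inner R_def)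
          then have "real_of_int (b'$k) - R$k \<bullet> v \<le> infnorm (R *v (v - zs))"
            using component_le_infnorm_cart[of "R *v (v - zs)" k] by linarith
          then show "ereal (real_of_int (b'$k) - R$k \<bullet> v) \<le> ereal (infnorm (real_mat A *v (v - zs)))"
            by (simp add: R_def)
        qed
      qed
    qed
    have w: "width_dir (R$k) (polyh A b) \<le> ereal (real_of_int (b$k)) - ereal (R$k \<bullet> v)"
      unfolding width_dir_def
    proof (rule ereal_minus_mono)
      show "(SUP x\<in>polyh A b. ereal (R$k \<bullet> x)) \<le> ereal (real_of_int (b$k))"
      proof (rule SUP_least)
        fix x assume "x \<in> polyh A b"
        then have "R$k \<bullet> x \<le> real_of_int (b$k)" by (simp add: polyh_def matrix_vector_mul_component R_def)
        then show "ereal (R$k \<bullet> x) \<le> ereal (real_of_int (b$k))" by simp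
      qed
      show "ereal (R$k \<bullet> v) \<le> (INF y\<in>polyh A b. ereal (R$k \<bullet> y))"
      proof (rule INF_greatest)
        fix y assume "y \<in> polyh A b"
        then have "R$k \<bullet> v \<le> R$k \<bullet> y" using vmin PQ by blast
        then show "ereal (R$k \<bullet> v) \<le> ereal (R$k \<bullet> y)" by simp
      qed
    qed
    have bk: "b$k + 1 \<le> b'$k" using kS b'S[OF kS] by (simp add: S_def)
    have "ereal (real_of_int (b$k)) - ereal (R$k \<bullet> v) = ereal (real_of_int (b'$k) - R$k \<bullet> v) - ereal 1 - ereal (real_of_int (b'$k - b$k - 1))"
      by simp
    also have "\<dots> \<le> ereal (real_of_int (b'$k) - R$k \<bullet> v) - 1"
    proof -
      have "ereal (real_of_int (b'$k) - R$k \<bullet> v) - ereal 1 - ereal (real_of_int (b'$k - b$k - 1))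
          = ereal (real_of_int (b'$k) - R$k \<bullet> v - 1 - real_of_int (b'$k - b$k - 1))" by simp
      also have "\<dots> \<le> ereal (real_of_int (b'$k) - R$k \<bullet> v - 1)" using bk by simp
      also have "\<dots> = ereal (real_of_int (b'$k) - R$k \<bullet> v) - 1" by (simp add: one_ereal_def)
      finally show ?thesis .
    qed
    also have "\<dots> \<le> pi_param A - 1" using pi_ge by (rule ereal_minus_mono) simp
    finally show ?thesis using w R_def by (metis order_trans)
  next
    case False
    then have "\<forall>k\<in>S. \<exists>d. (\<forall>j. R$j \<bullet> d \<le> 0) \<and> R$k \<bullet> d < 0" by (auto simp: not_le)
    then obtain dd where dd: "\<And>k. k \<in> S \<Longrightarrow> (\<forall>j. R$j \<bullet> dd k \<le> 0) \<and> R$k \<bullet> dd k < 0" by metis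
    define d where "d = (\<Sum>k\<in>S. dd k)"
    have d1: "\<forall>j. R$j \<bullet> d \<le> 0"
      unfolding d_def inner_sum_right using dd by (auto intro: sum_nonpos)
    have d2: "\<forall>k\<in>S. R$k \<bullet> d < 0"
    proof
      fix k assume kS: "k \<in> S"
      have "R$k \<bullet> d = R$k \<bullet> dd k + (\<Sum>k'\<in>S - {k}. R$k \<bullet> dd k')"
        unfolding d_def inner_sum_right using kS by (simp add: sum.remove)
      moreover have "(\<Sum>k'\<in>S - {k}. R$k \<bullet> dd k') \<le> 0" using dd by (auto intro: sum_nonpos)
      ultimately show "R$k \<bullet> d < 0" using dd[OF kS] by linarith
    qed
    obtain p where p1: "\<forall>j. (A *v p)$j \<le> 0" and p2: "\<forall>k\<in>S. (A *v p)$k < 0"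
      using int_dir[of A d S] d1 d2 by (auto simp: R_def)
    define zi where "zi = zi0 + p"
    have Az: "(A *v zi)$j = (A *v zi0)$j + (A *v p)$j" for j
      by (simp add: zi_def matrix_vector_right_distrib)
    have "\<forall>j. (A *v zi)$j \<le> b'$j" using Az p1 z0b' by (metis add_mono add_0_right)
    then have "(A *v zi)$k0 = b'$k0" using C1 k0S by blast
    moreover have "(A *v zi)$k0 < b'$k0" using Az p2 k0S b'S[OF k0S] by simp
    ultimately show ?thesis by simp
  qed
qed

end
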